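(* Let $m\geq 3$ and $n\in \mathbb{N}=\{1,2,\dots\}$. Then \[ p'_{m}(n)=\sum_{k=1}^\infty (-1)^{k+1} \big(p'_{m}(n- P_{m+2,k})+p'_m(n-Q_{m+2,k})\big), \] where $P_{m+2,k}=\frac{k(mk-(m-2))}{2}$ and $Q_{m+2,k}=\frac{k(mk+(m-2))}{2}$.
   Context: For an integer $m\ge 3$, $p'_m(n)$ is the number of partitions of $n$ in which every part is congruent to $0$, $1$ or $m-1$ modulo $m$; equivalently $\sum_{n\ge0}p'_m(n)q^n=\frac{1}{(q;q^m)_\infty(q^{m-1};q^m)_\infty(q^m;q^m)_\infty}$, where $(a;q)_\infty=\prod_{k\ge0}(1-aq^k)$. By convention $p'_m(0)=1$ and $p'_m(x)=0$ for $x\notin\mathbb{N}_0$. (For $m=3$, $p'_3=p$ is the ordinary partition function.) *)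

theory Defs
  imports Complex_Main "HOL-Library.Multiset"
begin

definition restricted_partitions :: "nat \<Rightarrow> nat \<Rightarrow> nat multiset set" where
  "restricted_partitions m n =
     {P. (\<forall>x\<in>#P. 0 < x \<and> (x mod m = 0 \<or> x mod m = 1 \<or> x mod m = m - 1)) \<and> sum_mset P = n}"

definition pm :: "nat \<Rightarrow> int \<Rightarrow> nat" where
  "pm m x = (if x < 0 then 0 else card (restricted_partitions m (nat x)))"

definition Pgen :: "nat \<Rightarrow> nat \<Rightarrow> int" where
  "Pgen m k = (int k * (int m * int k - (int m - 2))) div 2"

definition Qgen :: "nat \<Rightarrow> nat \<Rightarrow> int" where
  "Qgen m k = (int k * (int m * int k + (int m - 2))) div 2"

end

theory Submission
  imports Defs "HOL-Computational_Algebra.Formal_Power_Series"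
begin

unbundle fps_syntax



fun tri :: "nat \<Rightarrow> nat" where
  "tri 0 = 0" | "tri (Suc k) = tri k + k"

lemma tri_add: "tri (a + b) = tri a + tri b + a * b"
  by (induction b) (auto simp: algebra_simps)

fun qb :: "'a::comm_ring_1 \<Rightarrow> nat \<Rightarrow> nat \<Rightarrow> 'a" where
  "qb Q 0 k = (if k = 0 then 1 else 0)"
| "qb Q (Suc n) 0 = 1"
| "qb Q (Suc n) (Suc k) = Q ^ Suc k * qb Q n (Suc k) + qb Q n k"

lemma qb_gt: "n < k \<Longrightarrow> qb Q n k = 0"
proof (induction n arbitrary: k)
  case 0 then show ?case by simp
next
  case (Suc n) then show ?case by (cases k) auto
qed

lemma qb_0 [simp]: "qb Q n 0 = 1"
  by (cases n) auto

lemma qb_diag: "qb Q n n = 1"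
  by (induction n) (auto simp: qb_gt)

lemma rothe:
  fixes x u Q :: "'a::comm_ring_1"
  shows "(\<Prod>j<n. x - u * Q ^ j) = (\<Sum>k\<le>n. (-1)^k * qb Q n k * Q ^ tri k * u ^ k * x ^ (n - k))"
proof (induction n arbitrary: u)
  case 0 then show ?case by simp
next
  case (Suc n)
  define t where "t = (\<lambda>k. (-1)^k * qb Q n k * Q ^ tri k * (u*Q) ^ k * x ^ (n - k))"
  have IH: "(\<Prod>j<n. x - (u*Q) * Q ^ j) = (\<Sum>k\<le>n. t k)" using Suc t_def by simp
  have "(\<Prod>j<Suc n. x - u * Q ^ j) = (x - u) * (\<Prod>j<n. x - (u*Q) * Q ^ j)"
    by (subst prod.lessThan_Suc_shift) (simp add: mult.assoc)
  also have "\<dots> = x * (\<Sum>k\<le>n. t k) - u * (\<Sum>k\<le>n. t k)" using IH by (simp add: algebra_simps)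
  also have "x * (\<Sum>k\<le>n. t k) = x ^ Suc n + (\<Sum>k\<le>n. (-1)^Suc k * (Q ^ Suc k * qb Q n (Suc k)) * Q ^ tri (Suc k) * u ^ Suc k * x ^ (Suc n - Suc k))"
  proof -
    have "x * (\<Sum>k\<le>n. t k) = (\<Sum>k\<le>n. x * t k)" by (simp add: sum_distrib_left)
    also have "\<dots> = (\<Sum>k\<le>Suc n. x * t k)" using qb_gt[of n "Suc n" Q] by (simp add: t_def)
    also have "\<dots> = x * t 0 + (\<Sum>k\<le>n. x * t (Suc k))" by (rule sum.atMost_Suc_shift)
    also have "x * t 0 = x ^ Suc n" by (simp add: t_def)
    also have "(\<Sum>k\<le>n. x * t (Suc k)) = (\<Sum>k\<le>n. (-1)^Suc k * (Q ^ Suc k * qb Q n (Suc k)) * Q ^ tri (Suc k) * u ^ Suc k * x ^ (Suc n - Suc k))"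
    proof (rule sum.cong)
      fix k assume "k \<in> {..n}"
      show "x * t (Suc k) = (-1)^Suc k * (Q ^ Suc k * qb Q n (Suc k)) * Q ^ tri (Suc k) * u ^ Suc k * x ^ (Suc n - Suc k)"
      proof (cases "k < n")
        case True
        then have e: "x ^ (n - k) = x * x ^ (n - Suc k)" by (metis Suc_diff_Suc power_Suc)
        show ?thesis unfolding t_def by (simp add: e power_mult_distrib power_add algebra_simps)
      next
        case False then show ?thesis by (simp add: t_def qb_gt)
      qed
    qed simp
    finally show ?thesis .
  qed
  also have "u * (\<Sum>k\<le>n. t k) = - (\<Sum>k\<le>n. (-1)^Suc k * qb Q n k * Q ^ tri (Suc k) * u ^ Suc k * x ^ (Suc n - Suc k))"
    by (simp add: sum_distrib_left t_def power_mult_distrib power_add algebra_simps flip: sum_negf)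
  finally have "(\<Prod>j<Suc n. x - u * Q ^ j) = x ^ Suc n + (\<Sum>k\<le>n. (-1)^Suc k * (Q ^ Suc k * qb Q n (Suc k) + qb Q n k) * Q ^ tri (Suc k) * u ^ Suc k * x ^ (Suc n - Suc k))"
    by (simp add: algebra_simps sum.distrib sum_subtractf sum_negf)
  also have "\<dots> = (\<Sum>k\<le>Suc n. (-1)^k * qb Q (Suc n) k * Q ^ tri k * u ^ k * x ^ (Suc n - k))"
    by (simp add: sum.atMost_Suc_shift del: sum.atMost_Suc)
  finally show ?case .
qed





definition pp :: "'a::comm_ring_1 \<Rightarrow> nat \<Rightarrow> 'a" where
  "pp Q a = (\<Prod>j<a. 1 - Q ^ Suc j)"

lemma pp_Suc: "pp Q (Suc a) = pp Q a * (1 - Q ^ Suc a)"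
  by (simp add: pp_def)

lemma qb_pp_aux: "\<forall>a b. a + b = s \<longrightarrow> qb Q (a + b) a * pp Q a * pp Q b = pp Q (a + b)"
proof (induction s rule: less_induct)
  case (less s)
  show ?case
  proof (intro allI impI)
    fix a b assume ab: "a + b = s"
    show "qb Q (a + b) a * pp Q a * pp Q b = pp Q (a + b)"
    proof (cases "a = 0 \<or> b = 0")
      case True then show ?thesis
        by (auto simp: qb_diag pp_def)
    next
      case False
      then obtain a' b' where a: "a = Suc a'" and b: "b = Suc b'" by (metis not0_implies_Suc)
      have IH1: "qb Q (Suc a' + b') (Suc a') * pp Q (Suc a') * pp Q b' = pp Q (Suc a' + b')"
        using less[rule_format, of "Suc a' + b'" "Suc a'" b'] ab a b by simp
      have IH2: "qb Q (a' + Suc b') a' * pp Q a' * pp Q (Suc b') = pp Q (a' + Suc b')"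
        using less[rule_format, of "a' + Suc b'" a' "Suc b'"] ab a b by simp
      have "qb Q (a + b) a = Q ^ Suc a' * qb Q (Suc a' + b') (Suc a') + qb Q (a' + Suc b') a'"
        using a b by simp
      then have "qb Q (a + b) a * pp Q a * pp Q b =
          Q ^ Suc a' * (qb Q (Suc a' + b') (Suc a') * pp Q (Suc a') * pp Q b') * (1 - Q ^ Suc b')
          + (qb Q (a' + Suc b') a' * pp Q a' * pp Q (Suc b')) * (1 - Q ^ Suc a')"
        using a b by (simp add: pp_Suc algebra_simps)
      also have "\<dots> = pp Q (Suc (a' + b')) * (Q ^ Suc a' * (1 - Q ^ Suc b') + (1 - Q ^ Suc a'))"
        using IH1 IH2 by (simp add: algebra_simps)
      also have "\<dots> = pp Q (Suc (a' + b')) * (1 - Q ^ Suc (Suc (a' + b')))"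
      proof -
        have e: "Q ^ Suc a' * Q ^ Suc b' = Q ^ Suc (Suc (a' + b'))"
          by (simp add: power_add mult_ac)
        show ?thesis unfolding e[symmetric] by (simp add: algebra_simps)
      qed
      also have "\<dots> = pp Q (a + b)" using a b by (simp add: pp_Suc)
      finally show ?thesis .
    qed
  qed
qed

lemma qb_pp: "qb Q (a + b) a * pp Q a * pp Q b = pp Q (a + b)"
  using qb_pp_aux by blast

definition eqto :: "nat \<Rightarrow> 'a::comm_ring_1 fps \<Rightarrow> 'a fps \<Rightarrow> bool" where
  "eqto n f g \<longleftrightarrow> (\<forall>t\<le>n. f $ t = g $ t)"

lemma eqto_sym: "eqto n f g \<Longrightarrow> eqto n g f" by (auto simp: eqto_def)
lemma eqto_trans: "eqto n f g \<Longrightarrow> eqto n g h \<Longrightarrow> eqto n f h" by (auto simp: eqto_def)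

lemma eqto_mult_right: "eqto n f g \<Longrightarrow> eqto n (f * h) (g * h)"
  unfolding eqto_def fps_mult_nth by (auto intro!: sum.cong)

lemma eqto_mult_left: "eqto n f g \<Longrightarrow> eqto n (h * f) (h * g)"
  using eqto_mult_right[of n f g h] by (simp add: mult.commute)

lemma eqto_cancel:
  assumes "eqto n (f * h) (g * h)" "h $ 0 = 1"
  shows "eqto n f g"
proof -
  have "\<forall>s\<le>t. f $ s = g $ s" if "t \<le> n" for t
    using that
  proof (induction t)
    case 0 then show ?case using assms by (auto simp: eqto_def)
  next
    case (Suc t)
    then have IH: "\<forall>s\<le>t. f $ s = g $ s" by simp
    have "(f * h) $ Suc t = (g * h) $ Suc t" using assms(1) Suc.prems by (auto simp: eqto_def)
    then have "(\<Sum>i=0..Suc t. f$i * h$(Suc t - i)) = (\<Sum>i=0..Suc t. g$i * h$(Suc t - i))"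
      by (simp add: fps_mult_nth)
    moreover have "(\<Sum>i=0..t. f$i * h$(Suc t - i)) = (\<Sum>i=0..t. g$i * h$(Suc t - i))"
      using IH by (auto intro!: sum.cong)
    ultimately have "f $ Suc t = g $ Suc t" using assms(2) by simp
    then show ?case using IH le_Suc_eq by auto
  qed
  then show ?thesis by (auto simp: eqto_def)
qed


lemma pp_X_nth0: "m \<ge> 1 \<Longrightarrow> pp ((fps_X::'a::comm_ring_1 fps) ^ m) a $ 0 = 1"
  by (induction a) (auto simp: pp_Suc simp flip: power_mult, simp add: pp_def)

lemma pp_X_stable:
  assumes "m \<ge> 1" "a \<ge> n"
  shows "eqto n (pp ((fps_X::'a::comm_ring_1 fps) ^ m) a) (pp (fps_X ^ m) n)"
  using assms(2)
proof (induction a rule: dec_induct)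
  case base then show ?case by (simp add: eqto_def)
next
  case (step a)
  have "eqto n (1 - ((fps_X::'a fps) ^ m) ^ Suc a) 1"
  proof -
    have "Suc a \<le> m * Suc a" using mult_le_mono1[OF assms(1), of "Suc a"] by simp
    then have gt: "m * Suc a > n" using step.hyps(1) by linarith
    have e: "((fps_X::'a fps) ^ m) ^ Suc a = fps_X ^ (m * Suc a)" by (rule power_mult[symmetric])
    show ?thesis unfolding eqto_def e using gt by auto
  qed
  then have "eqto n (pp ((fps_X::'a fps) ^ m) a * (1 - (fps_X ^ m) ^ Suc a)) (pp (fps_X ^ m) a * 1)"
    by (rule eqto_mult_left)
  then show ?case using step(3) by (simp add: pp_Suc) (rule eqto_trans)
qed

lemma qb_cong:
  assumes "m \<ge> 1" "a \<ge> n" "b \<ge> n" "M \<ge> n"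
  shows "eqto n (qb ((fps_X::'a::comm_ring_1 fps) ^ m) (a + b) a * pp (fps_X ^ m) M) 1"
proof -
  let ?Q = "(fps_X::'a fps) ^ m"
  have e1: "qb ?Q (a + b) a * pp ?Q b * pp ?Q a = pp ?Q (a + b)" using qb_pp[of ?Q a b] by (simp add: algebra_simps)
  have e2: "eqto n (pp ?Q (a + b)) (pp ?Q n)" using pp_X_stable[OF assms(1), of n "a+b"] assms by simp
  have e3: "eqto n (pp ?Q a) (pp ?Q n)" using pp_X_stable[OF assms(1) assms(2)] .
  have "eqto n (qb ?Q (a + b) a * pp ?Q b * pp ?Q a) (1 * pp ?Q a)"
    unfolding e1 using eqto_trans[OF e2 eqto_sym[OF e3]] by simp
  then have 1: "eqto n (qb ?Q (a + b) a * pp ?Q b) 1"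
    by (rule eqto_cancel) (rule pp_X_nth0[OF assms(1)])
  have e4: "eqto n (pp ?Q b) (pp ?Q M)"
    by (rule eqto_trans[OF pp_X_stable[OF assms(1) assms(3)] eqto_sym[OF pp_X_stable[OF assms(1) assms(4)]]])
  have "eqto n (qb ?Q (a + b) a * pp ?Q M) (qb ?Q (a + b) a * pp ?Q b)"
    by (rule eqto_mult_left[OF eqto_sym[OF e4]])
  then show ?thesis by (rule eqto_trans[OF _ 1])
qed





definition msets :: "nat set \<Rightarrow> nat \<Rightarrow> nat multiset set" where
  "msets A n = {P. set_mset P \<subseteq> A \<and> sum_mset P = n}"

lemma size_le_sum: "0 \<notin> set_mset P \<Longrightarrow> size P \<le> sum_mset (P :: nat multiset)"
proof (induction P)
  case empty then show ?case by simp
next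
  case (add x P)
  then have "x \<ge> 1" by (cases x) auto
  with add show ?case by simp
qed

lemma finite_msets:
  assumes "finite A" "0 \<notin> A"
  shows "finite (msets A n)"
proof -
  have "msets A n \<subseteq> mset ` {xs. set xs \<subseteq> A \<and> length xs \<le> n}"
  proof
    fix P assume P: "P \<in> msets A n"
    obtain xs where xs: "mset xs = P" using ex_mset by blast
    have "0 \<notin> set_mset P" using P assms(2) by (auto simp: msets_def)
    then have "size P \<le> n" using size_le_sum P by (auto simp: msets_def)
    then show "P \<in> mset ` {xs. set xs \<subseteq> A \<and> length xs \<le> n}"
      using xs P by (auto simp: msets_def)
  qed
  moreover have "finite {xs. set xs \<subseteq> A \<and> length xs \<le> n}"
    using finite_lists_length_le[OF assms(1)] by simp
  ultimately show ?thesis by (meson finite_imageI finite_subset)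
qed

lemma sum_remove:
  assumes "a \<in># P" shows "sum_mset P = sum_mset (P - {#a#}) + (a::nat)"
proof -
  have "sum_mset (add_mset a (P - {#a#})) = a + sum_mset (P - {#a#})" by simp
  then show ?thesis using insert_DiffM[OF assms] by simp
qed

definition genf :: "nat set \<Rightarrow> int fps" where
  "genf A = Abs_fps (\<lambda>n. int (card (msets A n)))"

lemma msets_empty: "msets {} n = (if n = 0 then {{#}} else {})"
  by (auto simp: msets_def)

lemma card_msets_insert:
  assumes "finite A" "0 \<notin> insert a A" "a \<notin> A"
  shows "card (msets (insert a A) t) = card (msets A t) + (if a \<le> t then card (msets (insert a A) (t - a)) else 0)"
proof -
  have fin: "finite (msets (insert a A) t)" using finite_msets assms by simp
  let ?S1 = "{P \<in> msets (insert a A) t. a \<notin># P}"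
  let ?S2 = "{P \<in> msets (insert a A) t. a \<in># P}"
  have split: "msets (insert a A) t = ?S1 \<union> ?S2" by blast
  have s1: "?S1 = msets A t" using assms(3) by (auto simp: msets_def)
  have s2: "card ?S2 = (if a \<le> t then card (msets (insert a A) (t - a)) else 0)"
  proof (cases "a \<le> t")
    case True
    have "?S2 = (\<lambda>P. P + {#a#}) ` msets (insert a A) (t - a)"
    proof
      show "?S2 \<subseteq> (\<lambda>P. P + {#a#}) ` msets (insert a A) (t - a)"
      proof
        fix P assume P: "P \<in> ?S2"
        then have "P = (P - {#a#}) + {#a#}" by simp
        moreover have "sum_mset P = sum_mset (P - {#a#}) + a" using P
          by (simp add: sum_remove)
        moreover have "set_mset (P - {#a#}) \<subseteq> insert a A" using P
          by (auto simp: msets_def dest: in_diffD)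
        ultimately show "P \<in> (\<lambda>P. P + {#a#}) ` msets (insert a A) (t - a)"
          using P by (auto simp: msets_def intro!: image_eqI[of _ _ "P - {#a#}"])
      qed
    next
      show "(\<lambda>P. P + {#a#}) ` msets (insert a A) (t - a) \<subseteq> ?S2"
        using True by (auto simp: msets_def)
    qed
    moreover have "inj_on (\<lambda>P. P + {#a#}) (msets (insert a A) (t - a))"
      by (auto simp: inj_on_def)
    ultimately show ?thesis using True by (simp add: card_image)
  next
    case False
    have e: "?S2 = {}"
    proof (rule ccontr)
      assume "?S2 \<noteq> {}"
      then obtain P where P: "P \<in> ?S2" by blast
      then have "sum_mset P = sum_mset (P - {#a#}) + a"
        by (simp add: sum_remove)
      then show False using P False by (auto simp: msets_def)
    qed
    show ?thesis unfolding e using False by simp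
  qed
  have "card (msets (insert a A) t) = card ?S1 + card ?S2"
    by (subst split, rule card_Un_disjoint) (use fin in auto)
  then show ?thesis using s1 s2 by simp
qed

lemma genf_prod:
  assumes "finite A" "0 \<notin> A"
  shows "(\<Prod>a\<in>A. 1 - fps_X ^ a) * genf A = 1"
  using assms
proof (induction A rule: finite_induct)
  case empty
  show ?case by (auto simp: genf_def msets_empty fps_eq_iff)
next
  case (insert a A)
  have "(1 - fps_X ^ a) * genf (insert a A) = genf A"
  proof (rule fps_ext)
    fix t
    show "((1 - fps_X ^ a) * genf (insert a A)) $ t = genf A $ t"
      using card_msets_insert[of A a t] insert
      by (auto simp: algebra_simps genf_def fps_X_power_mult_nth)
  qed
  have "(1 - fps_X ^ a) * ((\<Prod>a\<in>A. 1 - fps_X ^ a) * genf (insert a A)) =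
     (\<Prod>a\<in>A. 1 - fps_X ^ a) * ((1 - fps_X ^ a) * genf (insert a A))"
    by (rule mult.left_commute)
  also have "\<dots> = 1" using insert \<open>(1 - fps_X ^ a) * genf (insert a A) = genf A\<close> by simp
  finally show ?case using insert by (simp add: mult.assoc)
qed





lemma tri_double: "2 * tri j + j = j * j"
  by (induction j) auto

definition ee :: "nat \<Rightarrow> nat \<Rightarrow> nat \<Rightarrow> nat" where
  "ee m N k = (if N \<le> k then m * tri (k - N) + (k - N) else m * tri (N - k) + (m - 1) * (N - k))"

lemma ee_exp:
  assumes "m \<ge> 1" "N \<ge> 1" "k \<le> 2 * N"
  shows "m * tri k + (m * N - 1) * (2 * N - k) = (m * tri N + (m * N - 1) * N) + ee m N k"
proof -
  define c where "c = m * N - 1"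
  have "m * N \<ge> 1" using assms(1,2) by simp
  then have hc: "c + 1 = m * N" unfolding c_def by simp
  show ?thesis
  proof (cases "N \<le> k")
    case True
    define i where "i = k - N"
    define r where "r = N - i"
    have N: "N = i + r" and k: "k = i + r + i" and k2: "2 * N - k = r"
      using True assms(3) unfolding i_def r_def by auto
    have "(c + 1) * i = m * (i + r) * i" using hc N by simp
    then have h: "c * i + i = m * (i + r) * i" by (simp add: algebra_simps)
    have "m * tri (i + r + i) + c * r = m * tri (i + r) + c * (i + r) + (m * tri i + i)"
      using h by (simp add: tri_add algebra_simps)
    then have "m * tri k + c * (2 * N - k) = m * tri N + c * N + (m * tri i + i)"
      using N k k2 by simp
    moreover have "ee m N k = m * tri i + i" unfolding ee_def using True by (simp add: i_def)
    ultimately show ?thesis unfolding c_def by simp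
  next
    case False
    define j where "j = N - k"
    obtain m' where m: "m = Suc m'" using assms(1) by (cases m) auto
    have N: "N = k + j" and k2: "2 * N - k = k + 2 * j" using False unfolding j_def by auto
    have "(c + 1) * j = m * (k + j) * j" using hc N by simp
    then have h: "c * j + j = m * (k + j) * j" by (simp add: algebra_simps)
    have t: "m * (2 * tri j + j) = m * (j * j)" using tri_double by simp
    have "m * tri k + c * (k + 2 * j) = m * tri (k + j) + c * (k + j) + (m * tri j + m' * j)"
      using h t m by (simp add: tri_add algebra_simps)
    then have "m * tri k + c * (2 * N - k) = m * tri N + c * N + (m * tri j + m' * j)"
      using N k2 by simp
    moreover have "ee m N k = m * tri j + m' * j" unfolding ee_def using False m by (simp add: j_def)
    ultimately show ?thesis unfolding c_def by simp
  qed
qed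

lemma prod_split_add: "(\<Prod>j<a+b. f j :: 'a::comm_monoid_mult) = (\<Prod>j<a. f j) * (\<Prod>j<b. f (a + j))" for a b :: nat
  by (induction b) (simp_all add: mult.assoc)

lemma prod_negX: "(\<Prod>j<N. - ((fps_X::int fps) ^ (m * j))) = (-1) ^ N * fps_X ^ (m * tri N)"
  by (induction N) (simp_all add: power_add algebra_simps)

definition EE :: "nat \<Rightarrow> nat \<Rightarrow> int fps" where
  "EE m N = (\<Prod>j<N. 1 - fps_X ^ (m * (N - j) - 1)) * (\<Prod>i<N. 1 - fps_X ^ (m * i + 1))"

lemma lhs_split:
  assumes "m \<ge> 1" "N \<ge> 1"
  shows "(\<Prod>j<2*N. (fps_X::int fps) ^ (m * N - 1) - fps_X ^ (m * j))
     = (-1) ^ N * fps_X ^ (m * tri N + (m * N - 1) * N) * EE m N"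
proof -
  have "(\<Prod>j<2*N. (fps_X::int fps) ^ (m * N - 1) - fps_X ^ (m * j))
     = (\<Prod>j<N. (fps_X::int fps) ^ (m * N - 1) - fps_X ^ (m * j)) *
       (\<Prod>i<N. (fps_X::int fps) ^ (m * N - 1) - fps_X ^ (m * (N + i)))"
    using prod_split_add[of _ N N] by (simp add: mult_2)
  also have "(\<Prod>j<N. (fps_X::int fps) ^ (m * N - 1) - fps_X ^ (m * j))
      = (\<Prod>j<N. (- (fps_X ^ (m * j))) * (1 - fps_X ^ (m * (N - j) - 1)))"
  proof (rule prod.cong)
    fix j assume "j \<in> {..<N}"
    then have jN: "j < N" by simp
    have "N = j + (N - j)" using jN by simp
    then have a1: "m * N = m * j + m * (N - j)" by (metis add_mult_distrib2)
    have a2: "m * (N - j) \<ge> 1" using assms jN by simp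
    have "m * N - 1 = m * j + (m * (N - j) - 1)" using a1 a2 by linarith
    then have "(fps_X::int fps) ^ (m * N - 1) = fps_X ^ (m * j) * fps_X ^ (m * (N - j) - 1)"
      by (simp add: power_add)
    then show "(fps_X::int fps) ^ (m * N - 1) - fps_X ^ (m * j) = (- (fps_X ^ (m * j))) * (1 - fps_X ^ (m * (N - j) - 1))"
      by (simp add: algebra_simps)
  qed simp
  also have "\<dots> = (-1) ^ N * fps_X ^ (m * tri N) * (\<Prod>j<N. 1 - fps_X ^ (m * (N - j) - 1))"
    by (simp only: prod.distrib prod_negX)
  also have "(\<Prod>i<N. (fps_X::int fps) ^ (m * N - 1) - fps_X ^ (m * (N + i)))
      = (\<Prod>i<N. fps_X ^ (m * N - 1) * (1 - fps_X ^ (m * i + 1)))"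
  proof (rule prod.cong)
    fix i assume "i \<in> {..<N}"
    have a1: "m * (N + i) = m * N + m * i" by (simp add: add_mult_distrib2)
    have a2: "m * N \<ge> 1" using assms by simp
    have "m * (N + i) = (m * N - 1) + (m * i + 1)" using a1 a2 by linarith
    then have "(fps_X::int fps) ^ (m * (N + i)) = fps_X ^ (m * N - 1) * fps_X ^ (m * i + 1)"
      by (simp add: power_add)
    then show "(fps_X::int fps) ^ (m * N - 1) - fps_X ^ (m * (N + i)) = fps_X ^ (m * N - 1) * (1 - fps_X ^ (m * i + 1))"
      by (simp add: algebra_simps)
  qed simp
  also have "\<dots> = fps_X ^ ((m * N - 1) * N) * (\<Prod>i<N. 1 - fps_X ^ (m * i + 1))"
    by (simp add: prod.distrib power_mult)
  finally show ?thesis by (simp add: EE_def power_add algebra_simps)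
qed

lemma EE_sum:
  assumes "m \<ge> 1" "N \<ge> 1"
  shows "EE m N = (\<Sum>k\<le>2*N. (-1) ^ (k + N) * qb ((fps_X::int fps) ^ m) (2*N) k * fps_X ^ ee m N k)"
proof -
  let ?Q = "(fps_X::int fps) ^ m"
  let ?x = "(fps_X::int fps) ^ (m * N - 1)"
  let ?A = "m * tri N + (m * N - 1) * N"
  have R: "(\<Prod>j<2*N. ?x - 1 * ?Q ^ j) = (\<Sum>k\<le>2*N. (-1)^k * qb ?Q (2*N) k * ?Q ^ tri k * 1 ^ k * ?x ^ (2*N - k))"
    by (rule rothe)
  have L: "(\<Prod>j<2*N. ?x - 1 * ?Q ^ j) = (-1) ^ N * fps_X ^ ?A * EE m N"
    using lhs_split[OF assms] by (simp add: power_mult)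
  have "(\<Sum>k\<le>2*N. (-1)^k * qb ?Q (2*N) k * ?Q ^ tri k * 1 ^ k * ?x ^ (2*N - k))
      = (\<Sum>k\<le>2*N. fps_X ^ ?A * ((-1)^k * qb ?Q (2*N) k * fps_X ^ ee m N k))"
  proof (rule sum.cong)
    fix k assume "k \<in> {..2*N}"
    then have "m * tri k + (m * N - 1) * (2 * N - k) = ?A + ee m N k" using ee_exp assms by simp
    then have "?Q ^ tri k * ?x ^ (2*N - k) = fps_X ^ ?A * fps_X ^ ee m N k"
      by (simp flip: power_mult power_add)
    then show "(-1)^k * qb ?Q (2*N) k * ?Q ^ tri k * 1 ^ k * ?x ^ (2*N - k)
      = fps_X ^ ?A * ((-1)^k * qb ?Q (2*N) k * fps_X ^ ee m N k)"
      by (simp add: mult_ac)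
  qed simp
  also have "\<dots> = fps_X ^ ?A * (\<Sum>k\<le>2*N. (-1)^k * qb ?Q (2*N) k * fps_X ^ ee m N k)"
    by (simp add: sum_distrib_left)
  finally have "fps_X ^ ?A * ((-1) ^ N * EE m N) = fps_X ^ ?A * (\<Sum>k\<le>2*N. (-1)^k * qb ?Q (2*N) k * fps_X ^ ee m N k)"
    using R L by (simp add: mult_ac)
  then have "(-1) ^ N * EE m N = (\<Sum>k\<le>2*N. (-1)^k * qb ?Q (2*N) k * fps_X ^ ee m N k)"
    by simp
  then have "EE m N = (-1) ^ N * (\<Sum>k\<le>2*N. (-1)^k * qb ?Q (2*N) k * fps_X ^ ee m N k)"
    by (metis (no_types, lifting) mult.assoc mult_1 power_add neg_one_even_power even_add)
  then show ?thesis by (simp add: sum_distrib_left power_add mult_ac)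
qed

lemma neg1_pow_nth: "(((-1)::int fps) ^ j * F) $ t = (-1) ^ j * F $ t"
  by (cases "even j") (simp_all)

lemma ee_ge1: "N \<le> k \<Longrightarrow> k - N \<le> ee m N k"
  by (simp add: ee_def)

lemma ee_ge2: "m \<ge> 2 \<Longrightarrow> k < N \<Longrightarrow> N - k \<le> ee m N k"
proof -
  assume "m \<ge> 2" "k < N"
  then have h: "N - k \<le> (m - 1) * (N - k)" using mult_le_mono1[of 1 "m-1" "N-k"] by simp
  have "ee m N k = m * tri (N - k) + (m - 1) * (N - k)" using \<open>k < N\<close> by (simp add: ee_def)
  then show ?thesis using h by linarith
qed

lemma EE_coeff:
  assumes "m \<ge> 3" "N = 2 * n + 1" "t \<le> n"
  shows "(EE m N * pp ((fps_X::int fps) ^ m) n) $ t = (\<Sum>k\<le>2*N. (-1)^(k+N) * (if ee m N k = t then 1 else 0))"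
proof -
  let ?Q = "(fps_X::int fps) ^ m"
  have "EE m N * pp ?Q n = (\<Sum>k\<le>2*N. (-1) ^ (k + N) * (fps_X ^ ee m N k * (qb ?Q (2*N) k * pp ?Q n)))"
  proof -
    have e: "EE m N = (\<Sum>k\<le>2*N. (-1) ^ (k + N) * qb ?Q (2*N) k * fps_X ^ ee m N k)"
      by (rule EE_sum) (use assms in auto)
    show ?thesis unfolding e sum_distrib_right by (rule sum.cong) (simp_all add: mult_ac)
  qed
  then have "(EE m N * pp ?Q n) $ t = (\<Sum>k\<le>2*N. (-1) ^ (k + N) * (if t < ee m N k then 0 else (qb ?Q (2*N) k * pp ?Q n) $ (t - ee m N k)))"
    by (simp add: fps_sum_nth neg1_pow_nth fps_X_power_mult_nth)
  also have "\<dots> = (\<Sum>k\<le>2*N. (-1)^(k+N) * (if ee m N k = t then 1 else 0))"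
  proof (rule sum.cong)
    fix k assume k: "k \<in> {..2*N}"
    show "(-1) ^ (k + N) * (if t < ee m N k then 0 else (qb ?Q (2*N) k * pp ?Q n) $ (t - ee m N k))
        = (-1)^(k+N) * (if ee m N k = t then 1 else 0)"
    proof (cases "t < ee m N k")
      case True then show ?thesis by simp
    next
      case False
      then have le: "ee m N k \<le> n" using assms by simp
      have bnd: "k \<ge> n \<and> 2 * N - k \<ge> n"
      proof (cases "N \<le> k")
        case True then show ?thesis using ee_ge1[OF True, of m] le assms k by auto
      next
        case False then show ?thesis using ee_ge2[of m k N] le assms k by auto
      qed
      have "eqto n (qb ?Q (k + (2 * N - k)) k * pp ?Q n) 1"
        by (rule qb_cong) (use assms bnd in auto)
      moreover have "k + (2 * N - k) = 2 * N" using k by simp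
      ultimately have "(qb ?Q (2*N) k * pp ?Q n) $ (t - ee m N k) = (1::int fps) $ (t - ee m N k)"
        using assms by (auto simp: eqto_def)
      then show ?thesis using False by auto
    qed
  qed simp
  finally show ?thesis .
qed





definition AS :: "nat \<Rightarrow> nat \<Rightarrow> nat set" where
  "AS m n = ((\<lambda>j. m * (2*n+1 - j) - 1) ` {..<2*n+1}) \<union> ((\<lambda>i. m * i + 1) ` {..<2*n+1}) \<union> ((\<lambda>j. m * Suc j) ` {..<n})"

lemma mod_m1: "m \<ge> 1 \<Longrightarrow> c \<ge> 1 \<Longrightarrow> (m * c - 1) mod m = m - 1" for m c :: nat
proof -
  assume "m \<ge> 1" "c \<ge> 1"
  then have e: "m * c - 1 = (m - 1) + m * (c - 1)"
    by (cases c) (auto simp: algebra_simps)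
  show ?thesis unfolding e mod_mult_self2 using \<open>m \<ge> 1\<close> by simp
qed

lemma mod_p1: "m \<ge> 2 \<Longrightarrow> (m * i + 1) mod m = 1" for m i :: nat
proof -
  assume "m \<ge> 2"
  have "(1 + m * i) mod m = 1 mod m" by (rule mod_mult_self2)
  then show ?thesis using \<open>m \<ge> 2\<close> by (simp add: add.commute)
qed

lemma AS_finite: "finite (AS m n)" by (simp add: AS_def)

lemma AS_pos: "m \<ge> 3 \<Longrightarrow> 0 \<notin> AS m n"
proof
  assume m: "m \<ge> 3" and "0 \<in> AS m n"
  then obtain j where j: "j < 2*n+1" "m * (2*n+1 - j) - 1 = 0" by (auto simp: AS_def)
  have "1 \<le> 2*n+1 - j" using j by simp
  then have "m * 1 \<le> m * (2*n+1 - j)" by (rule mult_le_mono2)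
  then show False using m j by linarith
qed

lemma AS_sub:
  assumes "m \<ge> 3" "x \<in> AS m n"
  shows "0 < x \<and> (x mod m = 0 \<or> x mod m = 1 \<or> x mod m = m - 1)"
proof -
  have "0 < x" using AS_pos[OF assms(1)] assms(2) by (cases x) auto
  moreover have "x mod m = 0 \<or> x mod m = 1 \<or> x mod m = m - 1"
    using assms mod_m1[of m] mod_p1[of m] unfolding AS_def by auto
  ultimately show ?thesis by blast
qed

lemma AS_sup:
  assumes "m \<ge> 3" "0 < x" "x \<le> n" "x mod m = 0 \<or> x mod m = 1 \<or> x mod m = m - 1"
  shows "x \<in> AS m n"
proof -
  define d where "d = x div m"
  have xd: "x = m * d + x mod m" unfolding d_def by simp
  have dx: "d \<le> x" unfolding d_def by (rule div_le_dividend)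
  consider "x mod m = 0" | "x mod m = 1" | "x mod m = m - 1" using assms(4) by metis
  then show ?thesis
  proof cases
    case 1
    then have "d \<ge> 1" using xd assms(2) by (cases d) auto
    moreover have "d \<le> n" using dx assms(3) by simp
    ultimately have "x = m * Suc (d - 1)" "d - 1 < n" using xd 1 by auto
    then show ?thesis unfolding AS_def by blast
  next
    case 2
    then have "x = m * d + 1" "d < 2*n+1" using xd dx assms(3) by auto
    then show ?thesis unfolding AS_def by blast
  next
    case 3
    define j where "j = 2*n+1 - Suc d"
    have jl: "j < 2*n+1" and nj: "2*n+1 - j = Suc d" using dx assms(3) unfolding j_def by auto
    have "x = m * Suc d - 1" using xd 3 assms(1) by (simp add: algebra_simps)
    then have "x = m * (2*n+1 - j) - 1" using nj by simp
    then show ?thesis using jl unfolding AS_def by blast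
  qed
qed

lemma elem_le_sum: "x \<in># P \<Longrightarrow> x \<le> sum_mset (P :: nat multiset)"
  using sum_remove[of x P] by simp

lemma msets_AS:
  assumes "m \<ge> 3" "t \<le> n"
  shows "msets (AS m n) t = restricted_partitions m t"
proof
  show "msets (AS m n) t \<subseteq> restricted_partitions m t"
  proof
    fix P assume P: "P \<in> msets (AS m n) t"
    have "\<forall>x\<in>#P. 0 < x \<and> (x mod m = 0 \<or> x mod m = 1 \<or> x mod m = m - 1)"
    proof
      fix x assume "x \<in># P"
      then have "x \<in> AS m n" using P by (auto simp: msets_def)
      then show "0 < x \<and> (x mod m = 0 \<or> x mod m = 1 \<or> x mod m = m - 1)" by (rule AS_sub[OF assms(1)])
    qed
    then show "P \<in> restricted_partitions m t" using P by (simp add: msets_def restricted_partitions_def)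
  qed
next
  show "restricted_partitions m t \<subseteq> msets (AS m n) t"
  proof
    fix P assume P: "P \<in> restricted_partitions m t"
    have "set_mset P \<subseteq> AS m n"
    proof
      fix x assume x: "x \<in># P"
      then have "x \<le> n" using elem_le_sum[OF x] P assms(2) by (auto simp: restricted_partitions_def)
      then show "x \<in> AS m n" using AS_sup[OF assms(1)] P x by (auto simp: restricted_partitions_def)
    qed
    then show "P \<in> msets (AS m n) t" using P by (auto simp: msets_def restricted_partitions_def)
  qed
qed





lemma prod_AS:
  assumes m: "m \<ge> 3"
  shows "(\<Prod>a\<in>AS m n. 1 - (fps_X::int fps) ^ a) = EE m (2*n+1) * pp ((fps_X::int fps) ^ m) n"
proof -
  define N where "N = 2*n+1"
  define h1 where "h1 = (\<lambda>j. m * (N - j) - 1)"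
  define h2 where "h2 = (\<lambda>i::nat. m * i + 1)"
  define h3 where "h3 = (\<lambda>j. m * Suc j)"
  let ?g = "\<lambda>a. 1 - (fps_X::int fps) ^ a"
  have AS: "AS m n = h1 ` {..<N} \<union> h2 ` {..<N} \<union> h3 ` {..<n}"
    unfolding AS_def h1_def h2_def h3_def N_def ..
  have mod1: "x mod m = m - 1" if "x \<in> h1 ` {..<N}" for x
    using that m mod_m1[of m] unfolding h1_def by auto
  have mod2: "x mod m = 1" if "x \<in> h2 ` {..<N}" for x
    using that m mod_p1[of m] unfolding h2_def by auto
  have mod3: "x mod m = 0" if "x \<in> h3 ` {..<n}" for x
    using that unfolding h3_def by auto
  have d12: "h1 ` {..<N} \<inter> h2 ` {..<N} = {}"
    using mod1 mod2 m by fastforce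
  have d3: "(h1 ` {..<N} \<union> h2 ` {..<N}) \<inter> h3 ` {..<n} = {}"
    using mod1 mod2 mod3 m by fastforce
  have inj1: "inj_on h1 {..<N}"
  proof (rule inj_onI)
    fix x y assume x: "x \<in> {..<N}" and y: "y \<in> {..<N}" and e: "h1 x = h1 y"
    have "m * (N - x) \<ge> 1" "m * (N - y) \<ge> 1" using x y m by auto
    then have "m * (N - x) = m * (N - y)" using e unfolding h1_def by linarith
    then have "N - x = N - y" using m by simp
    then show "x = y" using x y by simp
  qed
  have inj2: "inj_on h2 {..<N}" unfolding h2_def using m by (auto simp: inj_on_def)
  have inj3: "inj_on h3 {..<n}" unfolding h3_def using m by (auto simp: inj_on_def)
  have "(\<Prod>a\<in>AS m n. ?g a) = (\<Prod>a\<in>h1 ` {..<N}. ?g a) * (\<Prod>a\<in>h2 ` {..<N}. ?g a) * (\<Prod>a\<in>h3 ` {..<n}. ?g a)"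
    unfolding AS by (simp add: prod.union_disjoint d12 d3)
  also have "\<dots> = (\<Prod>j<N. ?g (h1 j)) * (\<Prod>j<N. ?g (h2 j)) * (\<Prod>j<n. ?g (h3 j))"
    by (simp add: prod.reindex inj1 inj2 inj3)
  also have "\<dots> = EE m N * pp ((fps_X::int fps) ^ m) n"
    unfolding EE_def pp_def h1_def h2_def h3_def power_mult[symmetric] by (rule refl)
  finally show ?thesis unfolding N_def .
qed





lemma main_int:
  assumes m: "m \<ge> 3" and n: "n \<ge> 1"
  shows "(\<Sum>k\<le>2*(2*n+1). (-1)^(k+(2*n+1)) * int (pm m (int n - int (ee m (2*n+1) k)))) = 0"
proof -
  define N where "N = 2*n+1"
  define A where "A = AS m n"
  define F where "F = EE m N * pp ((fps_X::int fps) ^ m) n"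
  have "(\<Prod>a\<in>A. 1 - fps_X ^ a) * genf A = 1"
    unfolding A_def by (rule genf_prod[OF AS_finite AS_pos[OF m]])
  then have one: "F * genf A = 1" unfolding F_def A_def N_def using prod_AS[OF m] by simp
  have "(F * genf A) $ n = 0" using one n by simp
  moreover have "(F * genf A) $ n = (\<Sum>i=0..n. F $ i * genf A $ (n - i))" by (rule fps_mult_nth)
  also have "\<dots> = (\<Sum>i=0..n. (\<Sum>k\<le>2*N. (-1)^(k+N) * (if ee m N k = i then 1 else 0)) * int (card (msets A (n - i))))"
  proof (rule sum.cong)
    fix i assume "i \<in> {0..n}"
    then have "F $ i = (\<Sum>k\<le>2*N. (-1)^(k+N) * (if ee m N k = i then 1 else 0))"
      unfolding F_def by (intro EE_coeff) (use m N_def in auto)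
    then show "F $ i * genf A $ (n - i) = (\<Sum>k\<le>2*N. (-1)^(k+N) * (if ee m N k = i then 1 else 0)) * int (card (msets A (n - i)))"
      by (simp add: genf_def)
  qed simp
  also have "\<dots> = (\<Sum>k\<le>2*N. (-1)^(k+N) * (\<Sum>i=0..n. (if ee m N k = i then int (card (msets A (n - i))) else 0)))"
  proof -
    have "(\<Sum>i=0..n. (\<Sum>k\<le>2*N. (-1)^(k+N) * (if ee m N k = i then 1 else 0)) * int (card (msets A (n - i))))
        = (\<Sum>i=0..n. \<Sum>k\<le>2*N. (-1)^(k+N) * (if ee m N k = i then int (card (msets A (n - i))) else 0))"
      by (simp only: sum_distrib_right) (rule sum.cong, simp, rule sum.cong, simp_all)
    also have "\<dots> = (\<Sum>k\<le>2*N. \<Sum>i=0..n. (-1)^(k+N) * (if ee m N k = i then int (card (msets A (n - i))) else 0))"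
      by (rule sum.swap)
    also have "\<dots> = (\<Sum>k\<le>2*N. (-1)^(k+N) * (\<Sum>i=0..n. (if ee m N k = i then int (card (msets A (n - i))) else 0)))"
      by (simp only: sum_distrib_left)
    finally show ?thesis .
  qed
  also have "\<dots> = (\<Sum>k\<le>2*N. (-1)^(k+N) * int (pm m (int n - int (ee m N k))))"
  proof (rule sum.cong)
    fix k assume "k \<in> {..2*N}"
    have "(\<Sum>i=0..n. (if ee m N k = i then int (card (msets A (n - i))) else 0))
        = (if ee m N k \<in> {0..n} then int (card (msets A (n - ee m N k))) else 0)"
      by (rule sum.delta'[OF finite_atLeastAtMost])
    also have "\<dots> = int (pm m (int n - int (ee m N k)))"
    proof (cases "ee m N k \<le> n")
      case True
      then have "nat (int n - int (ee m N k)) = n - ee m N k" by simp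
      moreover have "msets A (n - ee m N k) = restricted_partitions m (n - ee m N k)"
        unfolding A_def by (rule msets_AS[OF m]) simp
      ultimately show ?thesis using True by (simp add: pm_def)
    next
      case False then show ?thesis by (simp add: pm_def)
    qed
    finally show "(-1)^(k+N) * (\<Sum>i=0..n. (if ee m N k = i then int (card (msets A (n - i))) else 0))
        = (-1)^(k+N) * int (pm m (int n - int (ee m N k)))" by simp
  qed simp
  finally show ?thesis unfolding N_def by simp
qed




lemma sum_split_add: "(\<Sum>k<a+b. f k :: 'a::comm_monoid_add) = (\<Sum>k<a. f k) + (\<Sum>j<b. f (a + j))" for a b :: nat
  by (induction b) (simp_all add: add.assoc)

lemma sum_split3:
  fixes f :: "nat \<Rightarrow> 'a::comm_monoid_add"
  shows "(\<Sum>k\<le>2*N. f k) = (\<Sum>i<N. f (N - Suc i)) + f N + (\<Sum>i<N. f (N + Suc i))"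
proof -
  have "{..2*N} = {..<N + Suc N}" by auto
  then have "(\<Sum>k\<le>2*N. f k) = (\<Sum>k<N. f k) + (\<Sum>j<Suc N. f (N + j))"
    using sum_split_add[of f N "Suc N"] by simp
  also have "(\<Sum>j<Suc N. f (N + j)) = f N + (\<Sum>j<N. f (N + Suc j))"
    by (subst sum.lessThan_Suc_shift) simp
  also have "(\<Sum>k<N. f k) = (\<Sum>i<N. f (N - Suc i))"
    by (rule sum.nat_diff_reindex[symmetric])
  finally show ?thesis by (simp add: add.assoc)
qed

lemma Pgen_eq: "Pgen m k = int (m * tri k + k)"
proof -
  have h: "int k * int k = 2 * int (tri k) + int k"
    using arg_cong[OF tri_double[of k], of int] by simp
  have "int k * (int m * int k - (int m - 2)) = int m * (int k * int k) - int m * int k + 2 * int k"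
    by (simp add: algebra_simps)
  also have "\<dots> = 2 * int (m * tri k + k)" unfolding h by (simp add: algebra_simps)
  finally show ?thesis unfolding Pgen_def by simp
qed

lemma Qgen_eq: "m \<ge> 1 \<Longrightarrow> Qgen m k = int (m * tri k + (m - 1) * k)"
proof -
  assume m: "m \<ge> 1"
  then obtain m' where m': "m = Suc m'" by (cases m) auto
  have h: "int k * int k = 2 * int (tri k) + int k"
    using arg_cong[OF tri_double[of k], of int] by simp
  have "int k * (int m * int k + (int m - 2)) = int m * (int k * int k) + int m * int k - 2 * int k"
    by (simp add: algebra_simps)
  also have "\<dots> = 2 * int (m * tri k + (m - 1) * k)" unfolding h m' by (simp add: algebra_simps)
  finally show ?thesis unfolding Qgen_def by simp
qed

lemma neg1_shift: "(-1::int) ^ (2 * a + b) = (-1) ^ b"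
  by (simp add: power_add power_mult)

lemma main_int2:
  assumes m: "m \<ge> 3" and n: "n \<ge> 1"
  shows "int (pm m (int n)) = (\<Sum>i<2*n+1. (-1) ^ (Suc i + 1) *
            (int (pm m (int n - Pgen m (Suc i))) + int (pm m (int n - Qgen m (Suc i)))))"
proof -
  define N where "N = 2*n+1"
  define f where "f = (\<lambda>k. (-1::int)^(k+N) * int (pm m (int n - int (ee m N k))))"
  have z: "(\<Sum>k\<le>2*N. f k) = 0" unfolding f_def N_def using main_int[OF m n] by simp
  have fN: "f N = int (pm m (int n))"
    unfolding f_def by (simp add: ee_def neg1_shift[of N 0, simplified] flip: mult_2)
  have fP: "f (N + Suc i) = (-1) ^ Suc i * int (pm m (int n - Pgen m (Suc i)))" for i
  proof -
    have "ee m N (N + Suc i) = m * tri (Suc i) + Suc i" by (simp add: ee_def)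
    moreover have e: "N + Suc i + N = 2 * N + Suc i" by simp
    have "(-1::int) ^ (N + Suc i + N) = (-1) ^ Suc i"
      unfolding e by (rule neg1_shift)
    ultimately show ?thesis unfolding f_def Pgen_eq by simp
  qed
  have fQ: "f (N - Suc i) = (-1) ^ Suc i * int (pm m (int n - Qgen m (Suc i)))" if "i < N" for i
  proof -
    have "ee m N (N - Suc i) = m * tri (Suc i) + (m - 1) * Suc i"
      using that by (simp add: ee_def)
    moreover have e: "N - Suc i + N = 2 * (N - Suc i) + Suc i" using that by simp
    have "(-1::int) ^ (N - Suc i + N) = (-1) ^ Suc i"
      unfolding e by (rule neg1_shift)
    ultimately show ?thesis unfolding f_def using Qgen_eq[of m "Suc i"] m by simp
  qed
  have "0 = (\<Sum>i<N. f (N - Suc i)) + f N + (\<Sum>i<N. f (N + Suc i))"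
    using z sum_split3[of f N] by simp
  also have "(\<Sum>i<N. f (N - Suc i)) = (\<Sum>i<N. (-1) ^ Suc i * int (pm m (int n - Qgen m (Suc i))))"
    using fQ by simp
  also have "(\<Sum>i<N. f (N + Suc i)) = (\<Sum>i<N. (-1) ^ Suc i * int (pm m (int n - Pgen m (Suc i))))"
    using fP by simp
  finally have "int (pm m (int n)) = - ((\<Sum>i<N. (-1) ^ Suc i * int (pm m (int n - Qgen m (Suc i))))
       + (\<Sum>i<N. (-1) ^ Suc i * int (pm m (int n - Pgen m (Suc i)))))"
    using fN by linarith
  also have "\<dots> = (\<Sum>i<N. (-1) ^ (Suc i + 1) *
            (int (pm m (int n - Pgen m (Suc i))) + int (pm m (int n - Qgen m (Suc i)))))"
    by (simp add: sum.distrib[symmetric] sum_negf[symmetric] algebra_simps)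
  finally show ?thesis unfolding N_def .
qed

theorem theorem2p6:
  fixes m n :: nat
  assumes "m \<ge> 3" and "n \<ge> 1"
  shows "(\<lambda>k. (-1::real) ^ (Suc k + 1) *
            (real (pm m (int n - Pgen m (Suc k))) + real (pm m (int n - Qgen m (Suc k)))))
           sums real (pm m (int n))"
proof -
  let ?g = "\<lambda>k. (-1::real) ^ (Suc k + 1) *
            (real (pm m (int n - Pgen m (Suc k))) + real (pm m (int n - Qgen m (Suc k))))"
  have zero: "?g k = 0" if "k \<notin> {..<2*n+1}" for k
  proof -
    have k: "k \<ge> n" using that by simp
    have "Pgen m (Suc k) \<ge> int (Suc k)" unfolding Pgen_eq by simp
    then have p: "int n - Pgen m (Suc k) < 0" using k by simp
    have "(m - 1) * Suc k \<ge> 1 * Suc k" using assms(1) by (intro mult_le_mono1) simp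
    then have "Suc k \<le> (m - 1) * Suc k" by simp
    then have "m * tri (Suc k) + (m - 1) * Suc k \<ge> Suc k" by (rule trans_le_add2)
    then have "int (m * tri (Suc k) + (m - 1) * Suc k) \<ge> int (Suc k)" by (simp only: of_nat_le_iff)
    then have "Qgen m (Suc k) \<ge> int (Suc k)" using Qgen_eq[of m "Suc k"] assms(1) by simp
    then have q: "int n - Qgen m (Suc k) < 0" using k by simp
    show ?thesis using p q by (simp add: pm_def)
  qed
  have "?g sums (\<Sum>k<2*n+1. ?g k)" by (rule sums_finite) (use zero in auto)
  moreover have "(\<Sum>k<2*n+1. ?g k) = real (pm m (int n))"
  proof -
    have "real_of_int (int (pm m (int n))) = real_of_int (\<Sum>i<2*n+1. (-1) ^ (Suc i + 1) *
            (int (pm m (int n - Pgen m (Suc i))) + int (pm m (int n - Qgen m (Suc i)))))"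
      using main_int2[OF assms] by simp
    then show ?thesis by simp
  qed
  ultimately show ?thesis by simp
qed



end
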